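(* Let $\mathcal{W}=(A,\to,\mathbb{S},\mathsf{f}_{\mathtt{NF}},\mathsf{Aggr})$ be a wARS. Then $\mathcal{W}$ is bounded if all of the following hold: (1) the sARS $(A,\to)$ is terminating, finitely non-deterministic, and finitely branching; (2) the semiring $\mathbb{S}$ has the extremal property; (3) $\mathsf{f}_{\mathtt{NF}}(a)\neq\top$ for all $a\in\mathtt{NF}_\to$; and (4) all aggregators $\mathsf{Aggr}_{a\to B}$ are finite aggregators that do not use $\top$ as a constant.
   Context: A semiring $\mathbb{S}=(S,\oplus,\odot,\mathbf{0},\mathbf{1})$: $(S,\oplus,\mathbf{0})$ commutative monoid, $(S,\odot,\mathbf{1})$ monoid, $\odot$ distributes over $\oplus$, $\mathbf{0}$ annihilator. Natural order: $s\preccurlyeq t$ iff $s\oplus u=t$ for some $u$. A complete lattice semiring is one where $\preccurlyeq$ is antisymmetric and every subset $T\subseteq S$ has a least upper bound $\bigsqcup T$; $\top=\bigsqcup S$. Infinite sums/products of a sequence are the suprema of the finite partial sums/products. A function $f:S^n\to S$ ($n\in\mathbb{N}$) has the extremal property if $f(e_1,\dots,e_n)\neq\top$ whenever $e_1,\dots,e_n\in S\setminus\{\top\}$; the semiring has the extremal property if $\oplus$ and $\odot$ do. $\mathrm{Seq}(X)$: non-empty finite or infinite sequences over $X$. An sARS is $(A,\to)$ with $\to\subseteq A\times\mathrm{Seq}(A)$; $\mathtt{NF}_\to$ is the set of $a$ with no $B$ such that $a\to B$. It is finitely non-deterministic if each $a$ has only finitely many $B$ with $a\to B$, and finitely branching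 if $B$ is finite whenever $a\to B$. An $(A,\to)$-reduction tree (RT) is a labeled ordered tree (possibly of infinite depth) whose nodes $v$ carry labels $a_v\in A$ and whose ordered child sequence $vE$ is either empty or satisfies $a_v\to[a_w\mid w\in vE]$; $(A,\to)$ is terminating if all RTs have finite depth. Aggregators: smallest set containing constants $s\in S$, variables $v_1,v_2,\dots$, and $\bigoplus F$, $\bigodot F$ for non-empty finite or infinite sequences $F$ of aggregators; an aggregator is finite if it is constructed only from finite sequences $F$. Aggregators induce functions by substituting the $i$-th argument for $v_i$. A wARS $(A,\to,\mathbb{S},\mathsf{f}_{\mathtt{NF}},\mathsf{Aggr})$ consists of an sARS, a complete lattice semiring $\mathbb{S}$, a map $\mathsf{f}_{\mathtt{NF}}:\mathtt{NF}_\to\to S$, and for each $a\to B$ an aggregator $\mathsf{Aggr}_{a\to B}$ with variable indices $\le|B|$, viewed as a function $S^{|B|}\to S$. Weight of a finite-depth RT $\mathfrak{T}$ at node $v$: $\mathsf{f}_{\mathtt{NF}}(a_v)$ if $a_v\in\mathtt{NF}_\to$; $\mathbf{0}$ if $v$ is a leaf with $a_v\notin\mathtt{NF}_\to$; $\mathsf{Aggr}_{a_v\to B}[$weights of the children in order$]$ with $B=[a_w\mid w\in vE]$ otherwise; $[\![\mathfrak{T}]\!]$ is the weight at the root. $[\![a]\!]=\bigsqcup\{[\![\mathfrak{T}]\!]\mid\mathfrak{T}$ a finite-depth RT with root labeled $a\}$. The wARS is bounded if $[\![a]\!]\neq\top$ for all $a\in A$. *)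

theory Defs
  imports Main "HOL-Library.Extended_Nat"
begin

definition semiring :: "('s \<Rightarrow> 's \<Rightarrow> 's) \<Rightarrow> ('s \<Rightarrow> 's \<Rightarrow> 's) \<Rightarrow> 's \<Rightarrow> 's \<Rightarrow> bool" where
  "semiring pl tm e0 e1 \<longleftrightarrow>
     (\<forall>x y z. pl (pl x y) z = pl x (pl y z)) \<and> (\<forall>x y. pl x y = pl y x) \<and> (\<forall>x. pl e0 x = x) \<and>
     (\<forall>x y z. tm (tm x y) z = tm x (tm y z)) \<and> (\<forall>x. tm e1 x = x \<and> tm x e1 = x) \<and>
     (\<forall>x y z. tm x (pl y z) = pl (tm x y) (tm x z)) \<and>
     (\<forall>x y z. tm (pl y z) x = pl (tm y x) (tm z x)) \<and>
     (\<forall>x. tm e0 x = e0 \<and> tm x e0 = e0)"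

definition nat_le :: "('s \<Rightarrow> 's \<Rightarrow> 's) \<Rightarrow> 's \<Rightarrow> 's \<Rightarrow> bool" where
  "nat_le pl s t \<longleftrightarrow> (\<exists>u. pl s u = t)"

definition is_lub :: "('s \<Rightarrow> 's \<Rightarrow> 's) \<Rightarrow> 's set \<Rightarrow> 's \<Rightarrow> bool" where
  "is_lub pl T x \<longleftrightarrow> (\<forall>t\<in>T. nat_le pl t x) \<and> (\<forall>y. (\<forall>t\<in>T. nat_le pl t y) \<longrightarrow> nat_le pl x y)"

definition Lub :: "('s \<Rightarrow> 's \<Rightarrow> 's) \<Rightarrow> 's set \<Rightarrow> 's" where
  "Lub pl T = (THE x. is_lub pl T x)"

definition stop :: "('s \<Rightarrow> 's \<Rightarrow> 's) \<Rightarrow> 's" where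
  "stop pl = Lub pl UNIV"

definition complete_lattice_semiring :: "('s \<Rightarrow> 's \<Rightarrow> 's) \<Rightarrow> ('s \<Rightarrow> 's \<Rightarrow> 's) \<Rightarrow> 's \<Rightarrow> 's \<Rightarrow> bool" where
  "complete_lattice_semiring pl tm e0 e1 \<longleftrightarrow> semiring pl tm e0 e1 \<and>
     (\<forall>s t. nat_le pl s t \<and> nat_le pl t s \<longrightarrow> s = t) \<and>
     (\<forall>T. \<exists>x. is_lub pl T x)"

definition extremal_fun2 :: "('s \<Rightarrow> 's \<Rightarrow> 's) \<Rightarrow> ('s \<Rightarrow> 's \<Rightarrow> 's) \<Rightarrow> bool" where
  "extremal_fun2 pl f \<longleftrightarrow> (\<forall>x y. x \<noteq> stop pl \<and> y \<noteq> stop pl \<longrightarrow> f x y \<noteq> stop pl)"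

definition extremal_semiring :: "('s \<Rightarrow> 's \<Rightarrow> 's) \<Rightarrow> ('s \<Rightarrow> 's \<Rightarrow> 's) \<Rightarrow> bool" where
  "extremal_semiring pl tm \<longleftrightarrow> extremal_fun2 pl pl \<and> extremal_fun2 pl tm"

datatype 'a seq = FinS "'a list" | InfS "nat \<Rightarrow> 'a"

fun seq_len :: "'a seq \<Rightarrow> enat" where
  "seq_len (FinS xs) = enat (length xs)"
| "seq_len (InfS f) = \<infinity>"

fun seq_nonempty :: "'a seq \<Rightarrow> bool" where
  "seq_nonempty (FinS xs) = (xs \<noteq> [])"
| "seq_nonempty (InfS f) = True"

fun seq_finite :: "'a seq \<Rightarrow> bool" where
  "seq_finite (FinS xs) = True"
| "seq_finite (InfS f) = False"

fun seq_sum :: "('s \<Rightarrow> 's \<Rightarrow> 's) \<Rightarrow> 's \<Rightarrow> 's seq \<Rightarrow> 's" where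
  "seq_sum pl e0 (FinS xs) = foldr pl xs e0"
| "seq_sum pl e0 (InfS f) = Lub pl {foldr pl (map f [0..<n]) e0 | n. n \<ge> 1}"

fun seq_prod :: "('s \<Rightarrow> 's \<Rightarrow> 's) \<Rightarrow> ('s \<Rightarrow> 's \<Rightarrow> 's) \<Rightarrow> 's \<Rightarrow> 's seq \<Rightarrow> 's" where
  "seq_prod pl tm e1 (FinS xs) = foldr tm xs e1"
| "seq_prod pl tm e1 (InfS f) = Lub pl {foldr tm (map f [0..<n]) e1 | n. n \<ge> 1}"

text \<open>Var i denotes the variable v_i (indices start at 1).\<close>
datatype 's aggr = AConst 's | AVar nat | APlus "'s aggr seq" | ATimes "'s aggr seq"

primrec aggr_wf :: "'s aggr \<Rightarrow> bool" where
  "aggr_wf (AConst s) = True"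
| "aggr_wf (AVar i) = True"
| "aggr_wf (APlus F) = (seq_nonempty F \<and> (\<forall>b\<in>set_seq (map_seq aggr_wf F). b))"
| "aggr_wf (ATimes F) = (seq_nonempty F \<and> (\<forall>b\<in>set_seq (map_seq aggr_wf F). b))"

primrec aggr_finite :: "'s aggr \<Rightarrow> bool" where
  "aggr_finite (AConst s) = True"
| "aggr_finite (AVar i) = True"
| "aggr_finite (APlus F) = (seq_finite F \<and> (\<forall>b\<in>set_seq (map_seq aggr_finite F). b))"
| "aggr_finite (ATimes F) = (seq_finite F \<and> (\<forall>b\<in>set_seq (map_seq aggr_finite F). b))"

primrec aggr_vars :: "'s aggr \<Rightarrow> nat set" where
  "aggr_vars (AConst s) = {}"
| "aggr_vars (AVar i) = {i}"
| "aggr_vars (APlus F) = \<Union> (set_seq (map_seq aggr_vars F))"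
| "aggr_vars (ATimes F) = \<Union> (set_seq (map_seq aggr_vars F))"

primrec aggr_consts :: "'s aggr \<Rightarrow> 's set" where
  "aggr_consts (AConst s) = {s}"
| "aggr_consts (AVar i) = {}"
| "aggr_consts (APlus F) = \<Union> (set_seq (map_seq aggr_consts F))"
| "aggr_consts (ATimes F) = \<Union> (set_seq (map_seq aggr_consts F))"

primrec aggr_eval :: "('s \<Rightarrow> 's \<Rightarrow> 's) \<Rightarrow> ('s \<Rightarrow> 's \<Rightarrow> 's) \<Rightarrow> 's \<Rightarrow> 's \<Rightarrow> (nat \<Rightarrow> 's) \<Rightarrow> 's aggr \<Rightarrow> 's" where
  "aggr_eval pl tm e0 e1 env (AConst s) = s"
| "aggr_eval pl tm e0 e1 env (AVar i) = env i"
| "aggr_eval pl tm e0 e1 env (APlus F) = seq_sum pl e0 (map_seq (aggr_eval pl tm e0 e1 env) F)"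
| "aggr_eval pl tm e0 e1 env (ATimes F) = seq_prod pl tm e1 (map_seq (aggr_eval pl tm e0 e1 env) F)"

definition NF :: "('a \<Rightarrow> 'a seq \<Rightarrow> bool) \<Rightarrow> 'a set" where
  "NF rel = {a. \<not> (\<exists>B. rel a B)}"

definition sARS :: "('a \<Rightarrow> 'a seq \<Rightarrow> bool) \<Rightarrow> bool" where
  "sARS rel \<longleftrightarrow> (\<forall>a B. rel a B \<longrightarrow> seq_nonempty B)"

definition finitely_nondeterministic :: "('a \<Rightarrow> 'a seq \<Rightarrow> bool) \<Rightarrow> bool" where
  "finitely_nondeterministic rel \<longleftrightarrow> (\<forall>a. finite {B. rel a B})"

definition finitely_branching :: "('a \<Rightarrow> 'a seq \<Rightarrow> bool) \<Rightarrow> bool" where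
  "finitely_branching rel \<longleftrightarrow> (\<forall>a B. rel a B \<longrightarrow> seq_finite B)"

text \<open>A labeled ordered tree (possibly infinite depth / branching) is given by a set D of
  node addresses (lists of child positions, starting at 0) and a labeling lab.\<close>
definition is_tree :: "nat list set \<Rightarrow> bool" where
  "is_tree D \<longleftrightarrow> [] \<in> D \<and> (\<forall>v i. v @ [i] \<in> D \<longrightarrow> v \<in> D) \<and>
     (\<forall>v i. v @ [Suc i] \<in> D \<longrightarrow> v @ [i] \<in> D)"

definition children_seq :: "nat list set \<Rightarrow> (nat list \<Rightarrow> 'a) \<Rightarrow> nat list \<Rightarrow> 'a seq" where
  "children_seq D lab v =
     (if finite {i. v @ [i] \<in> D}
      then FinS (map (\<lambda>i. lab (v @ [i])) [0..<card {i. v @ [i] \<in> D}])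
      else InfS (\<lambda>i. lab (v @ [i])))"

definition is_leaf :: "nat list set \<Rightarrow> nat list \<Rightarrow> bool" where
  "is_leaf D v \<longleftrightarrow> (\<forall>i. v @ [i] \<notin> D)"

definition is_RT :: "('a \<Rightarrow> 'a seq \<Rightarrow> bool) \<Rightarrow> nat list set \<Rightarrow> (nat list \<Rightarrow> 'a) \<Rightarrow> bool" where
  "is_RT rel D lab \<longleftrightarrow> is_tree D \<and>
     (\<forall>v\<in>D. is_leaf D v \<or> rel (lab v) (children_seq D lab v))"

definition finite_depth :: "nat list set \<Rightarrow> bool" where
  "finite_depth D \<longleftrightarrow> (\<exists>n. \<forall>v\<in>D. length v \<le> n)"

definition terminating :: "('a \<Rightarrow> 'a seq \<Rightarrow> bool) \<Rightarrow> bool" where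
  "terminating rel \<longleftrightarrow> (\<forall>D lab. is_RT rel D lab \<longrightarrow> finite_depth D)"

definition depth :: "nat list set \<Rightarrow> nat" where
  "depth D = (LEAST n. \<forall>v\<in>D. length v \<le> n)"

definition wARS :: "('a \<Rightarrow> 'a seq \<Rightarrow> bool) \<Rightarrow> ('s \<Rightarrow> 's \<Rightarrow> 's) \<Rightarrow> ('s \<Rightarrow> 's \<Rightarrow> 's) \<Rightarrow> 's \<Rightarrow> 's
     \<Rightarrow> ('a \<Rightarrow> 's) \<Rightarrow> ('a \<Rightarrow> 'a seq \<Rightarrow> 's aggr) \<Rightarrow> bool" where
  "wARS rel pl tm e0 e1 fNF Aggr \<longleftrightarrow> sARS rel \<and> complete_lattice_semiring pl tm e0 e1 \<and>
     (\<forall>a B. rel a B \<longrightarrow> aggr_wf (Aggr a B) \<and>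
        (\<forall>i\<in>aggr_vars (Aggr a B). 1 \<le> i \<and> enat i \<le> seq_len B))"

text \<open>Weight at node v, computed with k levels of remaining height (correct once k bounds
  the height of the subtree below v).\<close>
fun node_weight :: "('a \<Rightarrow> 'a seq \<Rightarrow> bool) \<Rightarrow> ('s \<Rightarrow> 's \<Rightarrow> 's) \<Rightarrow> ('s \<Rightarrow> 's \<Rightarrow> 's) \<Rightarrow> 's \<Rightarrow> 's
     \<Rightarrow> ('a \<Rightarrow> 's) \<Rightarrow> ('a \<Rightarrow> 'a seq \<Rightarrow> 's aggr) \<Rightarrow> nat list set \<Rightarrow> (nat list \<Rightarrow> 'a)
     \<Rightarrow> nat \<Rightarrow> nat list \<Rightarrow> 's" where
  "node_weight rel pl tm e0 e1 fNF Aggr D lab k v =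
     (if lab v \<in> NF rel then fNF (lab v)
      else if is_leaf D v then e0
      else (case k of 0 \<Rightarrow> e0
            | Suc k' \<Rightarrow> aggr_eval pl tm e0 e1
                (\<lambda>i. node_weight rel pl tm e0 e1 fNF Aggr D lab k' (v @ [i - 1]))
                (Aggr (lab v) (children_seq D lab v))))"

definition tree_weight :: "('a \<Rightarrow> 'a seq \<Rightarrow> bool) \<Rightarrow> ('s \<Rightarrow> 's \<Rightarrow> 's) \<Rightarrow> ('s \<Rightarrow> 's \<Rightarrow> 's) \<Rightarrow> 's \<Rightarrow> 's
     \<Rightarrow> ('a \<Rightarrow> 's) \<Rightarrow> ('a \<Rightarrow> 'a seq \<Rightarrow> 's aggr) \<Rightarrow> nat list set \<Rightarrow> (nat list \<Rightarrow> 'a) \<Rightarrow> 's" where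
  "tree_weight rel pl tm e0 e1 fNF Aggr D lab = node_weight rel pl tm e0 e1 fNF Aggr D lab (depth D) []"

definition weight :: "('a \<Rightarrow> 'a seq \<Rightarrow> bool) \<Rightarrow> ('s \<Rightarrow> 's \<Rightarrow> 's) \<Rightarrow> ('s \<Rightarrow> 's \<Rightarrow> 's) \<Rightarrow> 's \<Rightarrow> 's
     \<Rightarrow> ('a \<Rightarrow> 's) \<Rightarrow> ('a \<Rightarrow> 'a seq \<Rightarrow> 's aggr) \<Rightarrow> 'a \<Rightarrow> 's" where
  "weight rel pl tm e0 e1 fNF Aggr a = Lub pl
     {tree_weight rel pl tm e0 e1 fNF Aggr D lab | D lab.
        is_RT rel D lab \<and> finite_depth D \<and> lab [] = a}"

definition bounded :: "('a \<Rightarrow> 'a seq \<Rightarrow> bool) \<Rightarrow> ('s \<Rightarrow> 's \<Rightarrow> 's) \<Rightarrow> ('s \<Rightarrow> 's \<Rightarrow> 's) \<Rightarrow> 's \<Rightarrow> 's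
     \<Rightarrow> ('a \<Rightarrow> 's) \<Rightarrow> ('a \<Rightarrow> 'a seq \<Rightarrow> 's aggr) \<Rightarrow> bool" where
  "bounded rel pl tm e0 e1 fNF Aggr \<longleftrightarrow> (\<forall>a. weight rel pl tm e0 e1 fNF Aggr a \<noteq> stop pl)"

end

theory Submission
  imports Defs
begin


lemma cls_semiring: "complete_lattice_semiring pl tm e0 e1 \<Longrightarrow> semiring pl tm e0 e1"
  by (simp add: complete_lattice_semiring_def)

lemma le_refl: assumes "complete_lattice_semiring pl tm e0 e1" shows "nat_le pl x x"
  using assms unfolding complete_lattice_semiring_def semiring_def nat_le_def by metis

lemma le_trans: assumes "complete_lattice_semiring pl tm e0 e1" "nat_le pl x y" "nat_le pl y z"
  shows "nat_le pl x z"
  using assms unfolding complete_lattice_semiring_def semiring_def nat_le_def by metis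

lemma le_antisym: assumes "complete_lattice_semiring pl tm e0 e1" "nat_le pl x y" "nat_le pl y x"
  shows "x = y"
  using assms unfolding complete_lattice_semiring_def by blast

lemma zero_le: assumes "complete_lattice_semiring pl tm e0 e1" shows "nat_le pl e0 x"
  using assms unfolding complete_lattice_semiring_def semiring_def nat_le_def by metis

lemma le_plI1: assumes "complete_lattice_semiring pl tm e0 e1" "nat_le pl x y" shows "nat_le pl x (pl y z)"
  using assms unfolding complete_lattice_semiring_def semiring_def nat_le_def by metis

lemma le_plI2: assumes "complete_lattice_semiring pl tm e0 e1" "nat_le pl x z" shows "nat_le pl x (pl y z)"
  using assms unfolding complete_lattice_semiring_def semiring_def nat_le_def by metis

lemma mono_pl: assumes "complete_lattice_semiring pl tm e0 e1" "nat_le pl x x'" "nat_le pl y y'"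
  shows "nat_le pl (pl x y) (pl x' y')"
proof -
  obtain u w where "pl x u = x'" "pl y w = y'" using assms(2,3) unfolding nat_le_def by blast
  then have "pl (pl x y) (pl u w) = pl x' y'"
    using assms(1) unfolding complete_lattice_semiring_def semiring_def by metis
  then show ?thesis unfolding nat_le_def by blast
qed

lemma mono_tm: assumes "complete_lattice_semiring pl tm e0 e1" "nat_le pl x x'" "nat_le pl y y'"
  shows "nat_le pl (tm x y) (tm x' y')"
proof -
  obtain u w where u: "pl x u = x'" "pl y w = y'" using assms(2,3) unfolding nat_le_def by blast
  have s: "semiring pl tm e0 e1" using assms(1) by (simp add: complete_lattice_semiring_def)
  have "tm x' y' = pl (tm x y) (pl (tm x w) (pl (tm u y) (tm u w)))"
    using s unfolding u[symmetric] semiring_def by metis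
  then show ?thesis unfolding nat_le_def by metis
qed

lemma lub_unique: assumes "complete_lattice_semiring pl tm e0 e1" "is_lub pl T x" "is_lub pl T y"
  shows "x = y"
  using assms le_antisym[OF assms(1)] unfolding is_lub_def by blast

lemma Lub_is_lub: assumes "complete_lattice_semiring pl tm e0 e1" shows "is_lub pl T (Lub pl T)"
proof -
  obtain x where "is_lub pl T x" using assms unfolding complete_lattice_semiring_def by blast
  then show ?thesis unfolding Lub_def using lub_unique[OF assms] by (metis theI)
qed

lemma le_top: assumes "complete_lattice_semiring pl tm e0 e1" shows "nat_le pl x (stop pl)"
  using Lub_is_lub[OF assms, of UNIV] unfolding stop_def is_lub_def by blast

lemma ge_top: assumes "complete_lattice_semiring pl tm e0 e1" "nat_le pl (stop pl) x" shows "x = stop pl"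
  using le_antisym[OF assms(1) le_top[OF assms(1)] assms(2)] .



lemma foldr_mono:
  assumes "complete_lattice_semiring pl tm e0 e1" "\<forall>x\<in>set xs. nat_le pl (g x) (h x)"
  shows "nat_le pl (foldr pl (map g xs) e0) (foldr pl (map h xs) e0)"
   and  "nat_le pl (foldr tm (map g xs) e1) (foldr tm (map h xs) e1)"
  using assms(2) by (induction xs) (auto intro: mono_pl[OF assms(1)] mono_tm[OF assms(1)] le_refl[OF assms(1)])

lemma aggr_mono:
  assumes cls: "complete_lattice_semiring pl tm e0 e1"
  shows "aggr_finite a \<Longrightarrow> (\<forall>i\<in>aggr_vars a. nat_le pl (env i) (env' i)) \<Longrightarrow>
    nat_le pl (aggr_eval pl tm e0 e1 env a) (aggr_eval pl tm e0 e1 env' a)"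
proof (induction a)
  case (AConst x) then show ?case by (simp add: le_refl[OF cls])
next
  case (AVar x) then show ?case by simp
next
  case (APlus F)
  then obtain xs where F: "F = FinS xs" by (cases F) auto
  show ?case using APlus unfolding F by (auto intro!: foldr_mono(1)[OF cls])
next
  case (ATimes F)
  then obtain xs where F: "F = FinS xs" by (cases F) auto
  show ?case using ATimes unfolding F by (auto intro!: foldr_mono(2)[OF cls])
qed

lemma foldr_pl_ntop:
  assumes "extremal_semiring pl tm" "e0 \<noteq> stop pl" "\<forall>x\<in>set xs. x \<noteq> stop pl"
  shows "foldr pl xs e0 \<noteq> stop pl"
  using assms(3) by (induction xs) (use assms(1,2) in \<open>auto simp: extremal_semiring_def extremal_fun2_def\<close>)

lemma foldr_tm_ntop:
  assumes "complete_lattice_semiring pl tm e0 e1" "extremal_semiring pl tm" "xs \<noteq> []" "\<forall>x\<in>set xs. x \<noteq> stop pl"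
  shows "foldr tm xs e1 \<noteq> stop pl"
  using assms(3,4)
proof (induction xs)
  case Nil then show ?case by simp
next
  case (Cons x xs)
  show ?case
  proof (cases "xs = []")
    case True
    have "tm x e1 = x" using assms(1) by (simp add: complete_lattice_semiring_def semiring_def)
    then show ?thesis using True Cons by simp
  next
    case False
    then show ?thesis using Cons assms(2) by (auto simp: extremal_semiring_def extremal_fun2_def)
  qed
qed

lemma aggr_ntop:
  assumes cls: "complete_lattice_semiring pl tm e0 e1" and ex: "extremal_semiring pl tm"
    and e0: "e0 \<noteq> stop pl"
  shows "aggr_finite a \<Longrightarrow> aggr_wf a \<Longrightarrow> stop pl \<notin> aggr_consts a \<Longrightarrow>
    (\<forall>i\<in>aggr_vars a. env i \<noteq> stop pl) \<Longrightarrow> aggr_eval pl tm e0 e1 env a \<noteq> stop pl"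
proof (induction a)
  case (AConst x) then show ?case by simp
next
  case (AVar x) then show ?case by simp
next
  case (APlus F)
  then obtain xs where F: "F = FinS xs" by (cases F) auto
  have "\<forall>x\<in>set (map (aggr_eval pl tm e0 e1 env) xs). x \<noteq> stop pl"
  proof
    fix y assume "y \<in> set (map (aggr_eval pl tm e0 e1 env) xs)"
    then obtain x where x: "x \<in> set xs" "y = aggr_eval pl tm e0 e1 env x" by auto
    have "aggr_finite x" "aggr_wf x" "stop pl \<notin> aggr_consts x" "\<forall>i\<in>aggr_vars x. env i \<noteq> stop pl"
      using APlus.prems x(1) unfolding F by auto
    then show "y \<noteq> stop pl" using APlus.IH[of x] x unfolding F by simp
  qed
  then show ?case unfolding F by (simp add: foldr_pl_ntop[OF ex e0])
next
  case (ATimes F)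
  then obtain xs where F: "F = FinS xs" by (cases F) auto
  have "\<forall>x\<in>set (map (aggr_eval pl tm e0 e1 env) xs). x \<noteq> stop pl"
  proof
    fix y assume "y \<in> set (map (aggr_eval pl tm e0 e1 env) xs)"
    then obtain x where x: "x \<in> set xs" "y = aggr_eval pl tm e0 e1 env x" by auto
    have "aggr_finite x" "aggr_wf x" "stop pl \<notin> aggr_consts x" "\<forall>i\<in>aggr_vars x. env i \<noteq> stop pl"
      using ATimes.prems x(1) unfolding F by auto
    then show "y \<noteq> stop pl" using ATimes.IH[of x] x unfolding F by simp
  qed
  moreover have "xs \<noteq> []" using ATimes.prems unfolding F by simp
  ultimately show ?case unfolding F by (simp add: foldr_tm_ntop[OF cls ex])
qed



lemma map_upt_app_eq:
  assumes "map P [0..<m] @ [i] = map P [0..<m'] @ [i']"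
  shows "m = m' \<and> i = i'"
proof -
  have "length (map P [0..<m] @ [i]) = length (map P [0..<m'] @ [i'])" using assms by simp
  then have "m = m'" by simp
  then show ?thesis using assms by simp
qed

lemma term_wf:
  assumes fb: "finitely_branching rel" and tm: "terminating rel"
  shows "wf {(b,a). \<exists>B. rel a B \<and> b \<in> set_seq B}"
proof (rule ccontr)
  assume "\<not> ?thesis"
  then obtain f where f: "\<And>n. \<exists>B. rel (f n) B \<and> f (Suc n) \<in> set_seq B"
    unfolding wf_iff_no_infinite_down_chain by auto
  have "\<forall>n. \<exists>xsp. rel (f n) (FinS (fst xsp)) \<and> snd xsp < length (fst xsp) \<and> fst xsp ! snd xsp = f (Suc n)"
  proof
    fix n
    obtain B where B: "rel (f n) B" "f (Suc n) \<in> set_seq B" using f by blast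
    then obtain xs where xs: "B = FinS xs" using fb unfolding finitely_branching_def
      by (cases B) (auto, fastforce)
    then obtain p where "p < length xs" "xs ! p = f (Suc n)" using B(2) by (auto simp: in_set_conv_nth)
    then show "\<exists>xsp. rel (f n) (FinS (fst xsp)) \<and> snd xsp < length (fst xsp) \<and> fst xsp ! snd xsp = f (Suc n)"
      using B(1) xs by (intro exI[of _ "(xs,p)"]) auto
  qed
  then obtain XP where XP: "\<And>n. rel (f n) (FinS (fst (XP n))) \<and> snd (XP n) < length (fst (XP n)) \<and> fst (XP n) ! snd (XP n) = f (Suc n)"
    by metis
  define X where "X n = fst (XP n)" for n
  define P where "P n = snd (XP n)" for n
  have X: "rel (f n) (FinS (X n))" "P n < length (X n)" "X n ! P n = f (Suc n)" for n
    using XP[of n] unfolding X_def P_def by auto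
  define D where "D = insert [] {map P [0..<m] @ [i] | m i. i < length (X m)}"
  define lab where "lab w = (if w = [] then f 0 else X (length w - 1) ! last w)" for w :: "nat list"
  have mapSuc: "map P [0..<Suc m] = map P [0..<m] @ [P m]" for m by simp
  have inD: "map P [0..<m] \<in> D" for m
  proof (cases m)
    case (Suc k) then show ?thesis unfolding D_def using X(2)[of k] mapSuc[of k] by blast
  qed (simp add: D_def)
  have labm: "lab (map P [0..<m]) = f m" for m
  proof (cases m)
    case (Suc k) then show ?thesis unfolding lab_def mapSuc[of k] using X(3)[of k] by simp
  qed (simp add: lab_def)
  have appD: "map P [0..<m] @ [i] \<in> D \<longleftrightarrow> i < length (X m)" for m i
  proof
    assume "map P [0..<m] @ [i] \<in> D"
    then obtain m' i' where e: "map P [0..<m] @ [i] = map P [0..<m'] @ [i']" "i' < length (X m')"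
      unfolding D_def by blast
    from map_upt_app_eq[OF e(1)] e(2) show "i < length (X m)" by simp
  next
    assume "i < length (X m)" then show "map P [0..<m] @ [i] \<in> D" unfolding D_def by blast
  qed
  have labapp: "lab (map P [0..<m] @ [i]) = X m ! i" for m i
    by (simp add: lab_def)
  have cases: "(\<exists>m. v = map P [0..<m]) \<or> is_leaf D v" if "v \<in> D" for v
  proof -
    have "v = [] \<or> (\<exists>m i. v = map P [0..<m] @ [i] \<and> i < length (X m))"
      using that unfolding D_def by blast
    then show ?thesis
    proof (elim disjE exE conjE)
      assume "v = []" then show ?thesis by (intro disjI1 exI[of _ 0]) simp
    next
      fix m i assume v2: "v = map P [0..<m] @ [i]" "i < length (X m)"
      note 2 = v2
      show ?thesis
      proof (cases "i = P m")
        case True then have "v = map P [0..<Suc m]" using 2 mapSuc[of m] by simp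
        then show ?thesis by blast
      next
        case False
        have "v @ [j] \<notin> D" for j
        proof
          assume "v @ [j] \<in> D"
          then obtain m' j' where e: "v @ [j] = map P [0..<m'] @ [j']"
            unfolding D_def by auto
          then have "length (v @ [j]) = length (map P [0..<m'] @ [j'])" by simp
          then have "m' = Suc m" using 2 by simp
          then have "v = map P [0..<m] @ [P m]" using e by simp
          then show False using 2 False by simp
        qed
        then show ?thesis unfolding is_leaf_def by blast
      qed
    qed
  qed
  have tree: "is_tree D"
    unfolding is_tree_def
  proof (intro conjI allI impI)
    show "[] \<in> D" by (simp add: D_def)
  next
    fix v i assume "v @ [i] \<in> D"
    then obtain m i' where "v @ [i] = map P [0..<m] @ [i']" unfolding D_def by auto
    then show "v \<in> D" using inD by simp
  next
    fix v i assume "v @ [Suc i] \<in> D"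
    then obtain m i' where "v @ [Suc i] = map P [0..<m] @ [i']" "i' < length (X m)" unfolding D_def by auto
    then show "v @ [i] \<in> D" using appD by simp
  qed
  have RT: "is_RT rel D lab"
    unfolding is_RT_def
  proof (intro conjI tree ballI)
    fix v assume "v \<in> D"
    from cases[OF this] show "is_leaf D v \<or> rel (lab v) (children_seq D lab v)"
    proof
      assume "\<exists>m. v = map P [0..<m]"
      then obtain m where v: "v = map P [0..<m]" by blast
      have ch: "{i. v @ [i] \<in> D} = {..<length (X m)}" using appD v by auto
      have "children_seq D lab v = FinS (map (\<lambda>i. lab (v @ [i])) [0..<length (X m)])"
        unfolding children_seq_def ch by simp
      also have "\<dots> = FinS (X m)" unfolding v labapp by (simp add: map_nth)
      finally show ?thesis using X(1)[of m] labm v by simp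
    qed simp
  qed
  have "\<not> finite_depth D"
  proof
    assume "finite_depth D"
    then obtain n where "\<forall>v\<in>D. length v \<le> n" unfolding finite_depth_def by blast
    then have "length (map P [0..<Suc n]) \<le> n" using inD[of "Suc n"] by blast
    then show False by simp
  qed
  then show False using tm RT unfolding terminating_def by blast
qed



definition sq_nth :: "'a seq \<Rightarrow> nat \<Rightarrow> 'a" where
  "sq_nth B j = (case B of FinS xs \<Rightarrow> xs ! j | InfS f \<Rightarrow> f j)"

lemma le_foldr_member:
  assumes "complete_lattice_semiring pl tm e0 e1" "x \<in> set ys"
  shows "nat_le pl (h x) (foldr pl (map h ys) e0)"
  using assms(2)
  by (induction ys) (auto intro: le_plI1[OF assms(1) le_refl[OF assms(1)]] le_plI2[OF assms(1)])

theorem theorem29: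
  fixes rel :: "'a \<Rightarrow> 'a seq \<Rightarrow> bool"
    and pl tm :: "'s \<Rightarrow> 's \<Rightarrow> 's" and e0 e1 :: 's
    and fNF :: "'a \<Rightarrow> 's" and Aggr :: "'a \<Rightarrow> 'a seq \<Rightarrow> 's aggr"
  assumes "wARS rel pl tm e0 e1 fNF Aggr"
    and "terminating rel" and "finitely_nondeterministic rel" and "finitely_branching rel"
    and "extremal_semiring pl tm"
    and "\<forall>a\<in>NF rel. fNF a \<noteq> stop pl"
    and "\<forall>a B. rel a B \<longrightarrow> aggr_finite (Aggr a B) \<and> stop pl \<notin> aggr_consts (Aggr a B)"
  shows "bounded rel pl tm e0 e1 fNF Aggr"
proof -
  note w = assms(1)[unfolded wARS_def]
  have cls: "complete_lattice_semiring pl tm e0 e1" using w by blast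
  have sars: "\<And>a B. rel a B \<Longrightarrow> seq_nonempty B" using w unfolding sARS_def by blast
  have awf: "\<And>a B. rel a B \<Longrightarrow> aggr_wf (Aggr a B)" using w by blast
  have avars: "\<And>a B i. rel a B \<Longrightarrow> i \<in> aggr_vars (Aggr a B) \<Longrightarrow> 1 \<le> i \<and> enat i \<le> seq_len B"
    using w by blast
  have fb: "\<And>a B. rel a B \<Longrightarrow> seq_finite B" using assms(4) unfolding finitely_branching_def by blast
  have fnd: "finite {B. rel a B}" for a using assms(3) unfolding finitely_nondeterministic_def by blast
  note ex = assms(5)
  have af: "\<And>a B. rel a B \<Longrightarrow> aggr_finite (Aggr a B)" and anc: "\<And>a B. rel a B \<Longrightarrow> stop pl \<notin> aggr_consts (Aggr a B)"
    using assms(7) by blast+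
  define R where "R = {(b,a). \<exists>B. rel a B \<and> b \<in> set_seq B}"
  have wfR: "wf R" unfolding R_def by (rule term_wf[OF assms(4) assms(2)])
  have e0: "e0 \<noteq> stop pl"
  proof
    assume e0top: "e0 = stop pl"
    obtain z where z: "\<forall>y. (y, z) \<in> R \<longrightarrow> y \<notin> UNIV"
      using wfR unfolding wf_eq_minimal by blast
    have "z \<in> NF rel"
    proof (rule ccontr)
      assume "z \<notin> NF rel"
      then obtain B where B: "rel z B" unfolding NF_def by blast
      then have "seq_nonempty B" by (rule sars)
      then obtain b where "b \<in> set_seq B" by (cases B) (auto simp: neq_Nil_conv, blast)
      then have "(b, z) \<in> R" using B unfolding R_def by blast
      then show False using z by blast
    qed
    then have "fNF z \<noteq> stop pl" using assms(6) by blast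
    moreover have "nat_le pl (stop pl) (fNF z)" using zero_le[OF cls] e0top by metis
    ultimately show False using ge_top[OF cls] by blast
  qed
  let ?NW = "node_weight rel pl tm e0 e1 fNF Aggr"
  let ?P = "\<lambda>a u. u \<noteq> stop pl \<and> (\<forall>D lab k v. is_RT rel D lab \<longrightarrow> lab v = a \<longrightarrow> nat_le pl (?NW D lab k v) u)"
  have main: "\<exists>u. ?P a u" for a
    using wfR
  proof (induction a rule: wf_induct_rule)
    case (less a)
    define g where "g b = (SOME u. ?P b u)" for b
    have g: "?P b (g b)" if "(b, a) \<in> R" for b
      unfolding g_def using less[OF that] by (rule someI_ex)
    show ?case
    proof (cases "a \<in> NF rel")
      case True
      show ?thesis
      proof (intro exI conjI allI impI)
        show "fNF a \<noteq> stop pl" using True assms(6) by blast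
        fix D lab k v assume "is_RT rel D lab" "lab v = a"
        then show "nat_le pl (?NW D lab k v) (fNF a)"
          using True by (subst node_weight.simps) (simp add: le_refl[OF cls])
      qed
    next
      case False
      obtain Bs where Bs: "set Bs = {B. rel a B}" using finite_list[OF fnd] by blast
      define h where "h B = aggr_eval pl tm e0 e1 (\<lambda>i. g (sq_nth B (i - 1))) (Aggr a B)" for B
      have envR: "(sq_nth B (i - 1), a) \<in> R" if th: "rel a B" "i \<in> aggr_vars (Aggr a B)" for B i
      proof -
        obtain xs where B: "B = FinS xs" using fb[OF th(1)] by (cases B) auto
        have "1 \<le> i" "i \<le> length xs" using avars[OF th] B by auto
        then have "sq_nth B (i - 1) \<in> set_seq B" unfolding B sq_nth_def by simp
        then show ?thesis using th(1) unfolding R_def by blast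
      qed
      have hnt: "h B \<noteq> stop pl" if "rel a B" for B
        unfolding h_def
        by (rule aggr_ntop[OF cls ex e0 af[OF that] awf[OF that] anc[OF that]])
           (use g envR[OF that] in blast)
      define u where "u = foldr pl (map h Bs) e0"
      show ?thesis
      proof (intro exI conjI allI impI)
        show "u \<noteq> stop pl" unfolding u_def
          by (rule foldr_pl_ntop[OF ex e0]) (use Bs hnt in auto)
        fix D lab k v assume RT: "is_RT rel D lab" and lv: "lab v = a"
        show "nat_le pl (?NW D lab k v) u"
        proof (cases "is_leaf D v \<or> k = 0")
          case True
          then have "?NW D lab k v = e0" using False lv
            by (subst node_weight.simps) (auto split: nat.split)
          then show ?thesis using zero_le[OF cls] by simp
        next
          case nl: False
          then obtain k' where k: "k = Suc k'" by (cases k) auto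
          obtain i0 where "v @ [i0] \<in> D" using nl unfolding is_leaf_def by blast
          then have vD: "v \<in> D" using RT unfolding is_RT_def is_tree_def by blast
          let ?B = "children_seq D lab v"
          have rB: "rel a ?B" using RT vD nl lv unfolding is_RT_def by blast
          define env where "env i = ?NW D lab k' (v @ [i - 1])" for i
          have eq: "?NW D lab k v = aggr_eval pl tm e0 e1 env (Aggr a ?B)"
            using False lv nl unfolding k env_def by (subst node_weight.simps) simp
          have fin: "finite {i. v @ [i] \<in> D}"
          proof (rule ccontr)
            assume "\<not> ?thesis"
            then have "?B = InfS (\<lambda>i. lab (v @ [i]))" unfolding children_seq_def by simp
            then show False using fb[OF rB] by simp
          qed
          define n where "n = card {i. v @ [i] \<in> D}"
          have Beq: "?B = FinS (map (\<lambda>i. lab (v @ [i])) [0..<n])"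
            unfolding children_seq_def n_def using fin by simp
          have "nat_le pl (env i) (g (sq_nth ?B (i - 1)))" if iv: "i \<in> aggr_vars (Aggr a ?B)" for i
          proof -
            have "1 \<le> i" "i \<le> n" using avars[OF rB iv] Beq by auto
            then have lb: "sq_nth ?B (i - 1) = lab (v @ [i - 1])" unfolding Beq sq_nth_def
              using nth_upt[of 0 "i - 1" n] by simp
            have "?P (sq_nth ?B (i - 1)) (g (sq_nth ?B (i - 1)))" using g envR[OF rB iv] by blast
            then show ?thesis unfolding env_def using RT lb by metis
          qed
          then have "nat_le pl (?NW D lab k v) (h ?B)"
            unfolding eq h_def by (intro aggr_mono[OF cls af[OF rB]]) blast
          moreover have "nat_le pl (h ?B) u" unfolding u_def
            by (rule le_foldr_member[OF cls]) (use Bs rB in blast)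
          ultimately show ?thesis by (rule le_trans[OF cls])
        qed
      qed
    qed
  qed
  show ?thesis unfolding bounded_def
  proof
    fix a
    obtain u where u: "?P a u" using main by blast
    let ?S = "{tree_weight rel pl tm e0 e1 fNF Aggr D lab | D lab.
        is_RT rel D lab \<and> finite_depth D \<and> lab [] = a}"
    have "\<forall>t\<in>?S. nat_le pl t u" using u unfolding tree_weight_def by blast
    then have "nat_le pl (Lub pl ?S) u" using Lub_is_lub[OF cls, of ?S] unfolding is_lub_def by blast
    then show "weight rel pl tm e0 e1 fNF Aggr a \<noteq> stop pl"
      unfolding weight_def using u ge_top[OF cls] by metis
  qed
qed

end
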